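(* If a CSCA $\mathbf{a}$ is fractal, then $\mathbf{a}^n$ is fractal for every $n\in\mathbb{N}$, $n\ge 1$.
   Context: $\mathcal{P}$ is the ring of Laurent polynomials in $u$ over $\mathbb{Z}_2$, $\mathcal{R}$ its subring of palindromes ($p(u^{-1})=p(u)$). A CSCA is a $2\times2$ matrix with entries in $\mathcal{R}$ and determinant $1$. A CSCA $\mathbf{a}$ is periodic if $\mathbf{a}^p=\mathbb{1}$ for some $p\ge1$. It has gliders if there exist a non-zero $\xi\in\mathcal{P}^2$ and an integer $k\neq0$ with $\mathbf{a}\xi=u^k\xi$. It is fractal if it is neither periodic nor has gliders. *)

theory Defs
  imports "HOL-Analysis.Analysis" "HOL-Library.Poly_Mapping" "HOL-Library.Z2"
begin

text \<open>Laurent polynomials in u over Z_2: finitely supported maps int => Z_2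
  (coefficient of u^i), with convolution product.\<close>
type_synonym lpoly = "int \<Rightarrow>\<^sub>0 bit"

definition upow :: "int \<Rightarrow> lpoly" where
  "upow k = Poly_Mapping.single k 1"

text \<open>Palindromes: p(u^-1) = p(u), i.e. coefficients symmetric about 0.\<close>
definition palindrome :: "lpoly \<Rightarrow> bool" where
  "palindrome p \<longleftrightarrow> (\<forall>i. Poly_Mapping.lookup p (- i) = Poly_Mapping.lookup p i)"

type_synonym lmat = "lpoly ^ 2 ^ 2"

definition csca :: "lmat \<Rightarrow> bool" where
  "csca a \<longleftrightarrow> (\<forall>i j. palindrome (a $ i $ j)) \<and> det a = 1"

definition mpow :: "lmat \<Rightarrow> nat \<Rightarrow> lmat" where
  "mpow a n = ((\<lambda>m. a ** m) ^^ n) (mat 1)"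

definition periodic :: "lmat \<Rightarrow> bool" where
  "periodic a \<longleftrightarrow> (\<exists>p::nat. p \<ge> 1 \<and> mpow a p = mat 1)"

definition has_gliders :: "lmat \<Rightarrow> bool" where
  "has_gliders a \<longleftrightarrow> (\<exists>(\<xi>::lpoly ^ 2) (k::int). \<xi> \<noteq> 0 \<and> k \<noteq> 0 \<and> a *v \<xi> = upow k *s \<xi>)"

definition fractal :: "lmat \<Rightarrow> bool" where
  "fractal a \<longleftrightarrow> \<not> periodic a \<and> \<not> has_gliders a"

end

theory Submission
  imports Defs
begin

definition lo :: "lpoly \<Rightarrow> int" where "lo f = Min (Poly_Mapping.keys f)"

lemma lo_key: "f \<noteq> 0 \<Longrightarrow> lo f \<in> Poly_Mapping.keys f"
  unfolding lo_def by (rule Min_in) auto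

lemma lo_le: "k \<in> Poly_Mapping.keys f \<Longrightarrow> lo f \<le> k"
  unfolding lo_def by (rule Min_le) auto

lemma lookup_lo: "f \<noteq> 0 \<Longrightarrow> Poly_Mapping.lookup f (lo f) = 1"
  using lo_key[of f] by (simp add: in_keys_iff)

lemma coeff_lo_mult:
  assumes "f \<noteq> 0" "g \<noteq> 0"
  shows "Poly_Mapping.lookup (f * g) (lo f + lo g) = 1"
proof -
  let ?K = "lo f + lo g"
  have inner: "(\<Sum>q. Poly_Mapping.lookup g q when ?K = l + q) = Poly_Mapping.lookup g (?K - l)" for l
  proof -
    have "(\<lambda>q. Poly_Mapping.lookup g q when ?K = l + q) = (\<lambda>q. if q = ?K - l then Poly_Mapping.lookup g q else 0)"
      by (auto simp: when_def fun_eq_iff)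
    then show ?thesis by (simp only: Sum_any.delta)
  qed
  have "Poly_Mapping.lookup (f * g) ?K = (\<Sum>l. Poly_Mapping.lookup f l * Poly_Mapping.lookup g (?K - l))"
    by (simp add: lookup_mult inner)
  also have "\<dots> = (\<Sum>l. if l = lo f then Poly_Mapping.lookup f l * Poly_Mapping.lookup g (?K - l) else 0)"
  proof (rule Sum_any.cong)
    fix l
    show "Poly_Mapping.lookup f l * Poly_Mapping.lookup g (?K - l) = (if l = lo f then Poly_Mapping.lookup f l * Poly_Mapping.lookup g (?K - l) else 0)"
    proof (cases "Poly_Mapping.lookup f l \<noteq> 0 \<and> Poly_Mapping.lookup g (?K - l) \<noteq> 0")
      case True
      then have "lo f \<le> l" "lo g \<le> ?K - l" using lo_le by (auto simp: in_keys_iff)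
      then show ?thesis by auto
    next
      case False then show ?thesis by auto
    qed
  qed
  also have "\<dots> = 1" using assms by (simp add: lookup_lo)
  finally show ?thesis .
qed

lemma lo_mult: assumes "f \<noteq> 0" "g \<noteq> 0" shows "lo (f * g) = lo f + lo g"
proof -
  have "lo f + lo g \<in> Poly_Mapping.keys (f * g)" using coeff_lo_mult[OF assms] by (simp add: in_keys_iff)
  moreover have "\<forall>k\<in>Poly_Mapping.keys (f*g). lo f + lo g \<le> k"
    using keys_mult[of f g] lo_le by (force intro: add_mono)
  ultimately show ?thesis unfolding lo_def
    by (intro Min_eqI) auto
qed

lemma lo_one: "lo 1 = 0"
proof -
  have "Poly_Mapping.keys (1::lpoly) = {0}"
    by (metis keys_single single_one zero_neq_one)
  then show ?thesis by (simp add: lo_def)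
qed

lemma lo_power: "f \<noteq> 0 \<Longrightarrow> lo (f ^ n) = int n * lo f"
  by (induction n) (auto simp: lo_mult algebra_simps lo_one)

lemma upow_mult: "upow a * upow b = upow (a + b)"
  by (simp add: upow_def mult_single)

lemma upow_power: "upow a ^ n = upow (int n * a)"
  by (induction n) (auto simp: mult_single algebra_simps upow_def)

lemma upow_nz: "upow a \<noteq> 0" unfolding upow_def
  by (metis Poly_Mapping.lookup_single_eq lookup_zero zero_neq_one)

lemma lo_upow: "lo (upow a) = a" by (simp add: lo_def upow_def)

lemma two_lpoly: "(2::lpoly) = 0"
  by (metis bit_2_eq_0 single_numeral single_zero)

lemma of_nat_bit: "(of_nat n :: bit) = (if odd n then 1 else 0)"
  by (induction n) auto

lemma sq_inj: fixes x y :: lpoly assumes "x^2 = y^2" shows "x = y"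
proof -
  have "(x - y)^2 = x^2 - y^2 + 2 * (y^2 - x*y)" by (simp add: power2_eq_square algebra_simps)
  then have "(x - y)^2 = 0" using assms two_lpoly by simp
  then show ?thesis by simp
qed

lemma root_unique: "(r::lpoly) \<noteq> 0 \<Longrightarrow> n \<ge> 1 \<Longrightarrow> r ^ n = s ^ n \<Longrightarrow> r = s"
proof (induction n arbitrary: r s rule: less_induct)
  case (less n)
  show ?case
  proof (cases "even n")
    case True
    then obtain m where m: "n = 2 * m" by auto
    with less.prems have "m \<ge> 1" "m < n" by auto
    have "(r^m)^2 = (s^m)^2" using less.prems m by (simp add: power_mult[symmetric] mult.commute)
    then have "r^m = s^m" by (rule sq_inj)
    then show ?thesis using less.IH[OF \<open>m < n\<close> less.prems(1) \<open>m \<ge> 1\<close>] by simp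
  next
    case False
    have s0: "s \<noteq> 0" using less.prems by (metis power_0_left power_not_zero not_one_le_zero)
    have "int n * lo r = int n * lo s" using less.prems s0 by (metis lo_power)
    then have lrs: "lo r = lo s" using less.prems by simp
    let ?L = "lo r"
    let ?G = "(\<Sum>i<n. s^(n - Suc i) * r^i)"
    have "Poly_Mapping.lookup ?G (int (n - 1) * ?L) = (\<Sum>i<n. Poly_Mapping.lookup (s^(n - Suc i) * r^i) (int (n - 1) * ?L))"
      by (simp add: lookup_sum)
    also have "\<dots> = (\<Sum>i<n. 1)"
    proof (rule sum.cong)
      fix i assume "i \<in> {..<n}"
      then have "int (n - 1) * ?L = lo (s^(n - Suc i)) + lo (r^i)"
        using lrs less.prems s0 by (simp add: lo_power of_nat_diff algebra_simps)
      then show "Poly_Mapping.lookup (s^(n - Suc i) * r^i) (int (n - 1) * ?L) = 1"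
        using coeff_lo_mult[of "s^(n - Suc i)" "r^i"] less.prems s0 by simp
    qed simp
    also have "\<dots> = 1" using False by (simp add: of_nat_bit)
    finally have "?G \<noteq> 0" by auto
    moreover have "(r - s) * ?G = 0" using power_diff_sumr2[of r n s] less.prems by simp
    ultimately show ?thesis by simp
  qed
qed

lemma nth_root:
  assumes "c \<noteq> 0" "r ^ n = upow k * c ^ n" "n \<ge> 1" "k \<noteq> 0"
  shows "\<exists>j. j \<noteq> 0 \<and> r = upow j * c"
proof -
  have r0: "r \<noteq> 0" using assms upow_nz by (metis mult_eq_0_iff power_eq_0_iff not_one_le_zero power_0_left)
  have "int n * lo r = k + int n * lo c"
    using arg_cong[OF assms(2), of lo] r0 assms(1) upow_nz by (simp add: lo_power lo_mult lo_upow)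
  then have k: "k = int n * (lo r - lo c)" by (simp add: algebra_simps)
  define j where "j = lo r - lo c"
  have "r ^ n = (upow j * c) ^ n" using assms(2) by (simp add: power_mult_distrib upow_power k j_def)
  then have "r = upow j * c" using root_unique r0 assms(3) by blast
  moreover have "j \<noteq> 0" using k assms(4) j_def by auto
  ultimately show ?thesis by blast
qed

lemma mpow_0: "mpow a 0 = mat 1" by (simp add: mpow_def)
lemma mpow_Suc: "mpow a (Suc m) = a ** mpow a m" by (simp add: mpow_def)

lemma mpow_add: "mpow a (m + l) = mpow a m ** mpow a l"
  by (induction m) (auto simp: mpow_0 mpow_Suc matrix_mul_assoc)

lemma mpow_mult: "mpow (mpow a n) p = mpow a (n * p)"
  by (induction p) (auto simp: mpow_0 mpow_Suc mpow_add)

lemma mpow_comm: "a ** mpow a n = mpow a n ** a"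
proof -
  have "a ** mpow a n = mpow a (Suc n)" by (simp add: mpow_Suc)
  also have "\<dots> = mpow a (n + 1)" by simp
  also have "\<dots> = mpow a n ** mpow a 1" by (rule mpow_add)
  also have "mpow a 1 = a" by (simp add: mpow_def)
  finally show ?thesis .
qed

lemma det_mpow: "det a = 1 \<Longrightarrow> det (mpow a n) = 1"
  by (induction n) (auto simp: mpow_0 mpow_Suc det_mul)

lemma mv_comp: "((A::lmat) *v v) $ i = A$i$1 * v$1 + A$i$2 * v$2"
  by (simp add: matrix_vector_mult_def sum_2)

lemma vec2_eq: "(v::lpoly^2) = w \<longleftrightarrow> v$1 = w$1 \<and> v$2 = w$2"
  by (simp add: vec_eq_iff forall_2)

lemma mv_scalar: "(A::lmat) *v (c *s x) = c *s (A *v x)"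
  by (simp add: vec2_eq mv_comp algebra_simps)

lemma glider_from:
  assumes c0: "c \<noteq> 0" and cr: "c *s (a *v \<xi>) = r *s \<xi>" and x0: "\<xi> \<noteq> 0"
    and ev: "mpow a n *v \<xi> = upow k *s \<xi>" and n: "n \<ge> 1" and k: "k \<noteq> 0"
  shows "has_gliders a"
proof -
  have ind: "c^m *s (mpow a m *v \<xi>) = r^m *s \<xi>" for m
  proof (induction m)
    case 0 then show ?case by (simp add: mpow_0)
  next
    case (Suc m)
    have "c^Suc m *s (mpow a (Suc m) *v \<xi>) = c *s (a *v (c^m *s (mpow a m *v \<xi>)))"
      by (simp add: mpow_Suc matrix_vector_mul_assoc[symmetric] mv_scalar vector_smult_assoc)
    also have "\<dots> = c *s (a *v (r^m *s \<xi>))" using Suc by simp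
    also have "\<dots> = r^m *s (c *s (a *v \<xi>))"
      by (simp add: mv_scalar vector_smult_assoc mult.commute)
    also have "\<dots> = r^m *s (r *s \<xi>)" using cr by simp
    finally show ?case by (simp add: vector_smult_assoc mult.commute)
  qed
  have "(c^n * upow k) *s \<xi> = r^n *s \<xi>" using ind[of n] ev by (simp add: vector_smult_assoc)
  moreover obtain i where "\<xi> $ i \<noteq> 0" using x0 by (auto simp: vec_eq_iff)
  ultimately have "c^n * upow k = r^n"
    by (metis mult_right_cancel vector_smult_component)
  then obtain j where j: "j \<noteq> 0" "r = upow j * c"
    using nth_root[OF c0 _ n k, of r] by (metis mult.commute)
  have "a *v \<xi> = upow j *s \<xi>"
    using cr c0 unfolding vec2_eq j by (simp add: algebra_simps)
  then show ?thesis unfolding has_gliders_def using x0 j by blast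
qed

theorem mainTheorem7:
  fixes a :: lmat and n :: nat
  assumes "csca a" and "fractal a" and "n \<ge> 1"
  shows "fractal (mpow a n)"
proof -
  have np: "\<not> periodic a" and ng: "\<not> has_gliders a" using assms(2) by (auto simp: fractal_def)
  have deta: "det a = 1" using assms(1) by (simp add: csca_def)
  have "\<not> periodic (mpow a n)"
  proof
    assume "periodic (mpow a n)"
    then obtain p where "p \<ge> 1" "mpow a (n * p) = mat 1" by (auto simp: periodic_def mpow_mult)
    moreover have "n * p \<ge> 1" using \<open>p \<ge> 1\<close> assms(3) by simp
    ultimately show False using np unfolding periodic_def by blast
  qed
  moreover have "\<not> has_gliders (mpow a n)"
  proof
    assume "has_gliders (mpow a n)"
    then obtain \<xi> k where x0: "\<xi> \<noteq> 0" and k: "k \<noteq> 0" and ev: "mpow a n *v \<xi> = upow k *s \<xi>"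
      by (auto simp: has_gliders_def)
    define B where "B = mpow a n"
    define \<zeta> where "\<zeta> = a *v \<xi>"
    have ev1: "B *v \<xi> = upow k *s \<xi>" using ev B_def by simp
    have ev2: "B *v \<zeta> = upow k *s \<zeta>"
      unfolding \<zeta>_def B_def
      by (metis matrix_vector_mul_assoc mpow_comm ev mv_scalar)
    have dB: "B$1$1 * B$2$2 - B$1$2 * B$2$1 = 1" using det_mpow[OF deta] det_2 B_def by metis
    define D where "D = \<xi>$1 * \<zeta>$2 - \<xi>$2 * \<zeta>$1"
    have idt: "(B$1$1*\<xi>$1+B$1$2*\<xi>$2)*(B$2$1*\<zeta>$1+B$2$2*\<zeta>$2) - (B$2$1*\<xi>$1+B$2$2*\<xi>$2)*(B$1$1*\<zeta>$1+B$1$2*\<zeta>$2)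
       = (B$1$1*B$2$2 - B$1$2*B$2$1)*(\<xi>$1*\<zeta>$2-\<xi>$2*\<zeta>$1)" by algebra
    have e1: "B$1$1*\<xi>$1+B$1$2*\<xi>$2 = upow k * \<xi>$1" and e2: "B$2$1*\<xi>$1+B$2$2*\<xi>$2 = upow k * \<xi>$2"
      using ev1 unfolding vec2_eq by (simp_all add: mv_comp)
    have e3: "B$1$1*\<zeta>$1+B$1$2*\<zeta>$2 = upow k * \<zeta>$1" and e4: "B$2$1*\<zeta>$1+B$2$2*\<zeta>$2 = upow k * \<zeta>$2"
      using ev2 unfolding vec2_eq by (simp_all add: mv_comp)
    have "(upow k * upow k) * D = D"
      using idt unfolding e1 e2 e3 e4 dB D_def by (simp add: algebra_simps)
    then have "(upow k * upow k - 1) * D = 0" by (simp add: algebra_simps)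
    moreover have "upow k * upow k \<noteq> 1"
    proof
      assume "upow k * upow k = 1"
      then have "lo (upow k * upow k) = lo 1" by simp
      then show False using k by (simp add: lo_mult upow_nz lo_upow lo_one)
    qed
    ultimately have D0: "D = 0" by simp
    show False
    proof (cases "\<xi>$1 = 0")
      case False
      have "\<xi>$1 *s \<zeta> = \<zeta>$1 *s \<xi>" using D0 unfolding vec2_eq D_def by (simp add: algebra_simps)
      then show False using glider_from[OF False _ x0 ev assms(3) k] ng \<zeta>_def by blast
    next
      case True
      then have y0: "\<xi>$2 \<noteq> 0" using x0 by (auto simp: vec2_eq)
      have "\<xi>$2 *s \<zeta> = \<zeta>$2 *s \<xi>" using D0 unfolding vec2_eq D_def by (simp add: algebra_simps)
      then show False using glider_from[OF y0 _ x0 ev assms(3) k] ng \<zeta>_def by blast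
    qed
  qed
  ultimately show ?thesis by (simp add: fractal_def)
qed

end
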